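(* Let $F(z)=\bar{z}G(z)+H(z)$, $z\in\mathbb{D}$, where $G(z)=\sum_{n=1}^\infty a_nz^n\not\equiv 0$ and $H(z)=z+\sum_{n=2}^\infty b_nz^n$ are analytic in $\mathbb{D}$, and suppose that for some $r\in(0,1)$, $$\sum_{n=2}^\infty n|b_n|r^{n-1}+\sum_{n=1}^\infty(n+1)|a_n|r^n\leq 1.$$ Then $F$ is sense-preserving, univalent and fully starlike in $\mathbb{D}_r$.
   Context: $\mathbb{D}=\{z:|z|<1\}$, $\mathbb{D}_r=\{z:|z|<r\}$. For a continuously differentiable $F$, $F_z=\frac12(F_x-iF_y)$, $F_{\bar z}=\frac12(F_x+iF_y)$, and the Jacobian is $J_F=|F_z|^2-|F_{\bar z}|^2$; $F$ is sense-preserving on a domain if $J_F>0$ there. $F$ is fully starlike in $\mathbb{D}_r$ if it is sense-preserving there, $F(0)=0$, $F(z)\neq 0$ for $z\in\mathbb{D}_r\setminus\{0\}$, and for each $s\in(0,r)$ the curve $t\mapsto F(se^{it})$ is starlike with respect to the origin, i.e. $\mathrm{Re}\big((zF_z(z)-\bar zF_{\bar z}(z))/F(z)\big)>0$ for all $|z|=s$. *)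

theory Defs
  imports "HOL-Analysis.Analysis"
begin

text \<open>Wirtinger derivatives of a (real-)differentiable function F on the complex plane,
  via the Frechet derivative L: F_x = L 1, F_y = L i.\<close>

definition wirt_z :: "(complex \<Rightarrow> complex) \<Rightarrow> complex \<Rightarrow> complex" where
  "wirt_z F z = (frechet_derivative F (at z) 1 - \<i> * frechet_derivative F (at z) \<i>) / 2"

definition wirt_zbar :: "(complex \<Rightarrow> complex) \<Rightarrow> complex \<Rightarrow> complex" where
  "wirt_zbar F z = (frechet_derivative F (at z) 1 + \<i> * frechet_derivative F (at z) \<i>) / 2"

definition jacobian_c :: "(complex \<Rightarrow> complex) \<Rightarrow> complex \<Rightarrow> real" where
  "jacobian_c F z = (cmod (wirt_z F z))\<^sup>2 - (cmod (wirt_zbar F z))\<^sup>2"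

definition sense_preserving :: "(complex \<Rightarrow> complex) \<Rightarrow> complex set \<Rightarrow> bool" where
  "sense_preserving F S \<longleftrightarrow> (\<forall>z\<in>S. F differentiable (at z) \<and> jacobian_c F z > 0)"

definition fully_starlike :: "(complex \<Rightarrow> complex) \<Rightarrow> real \<Rightarrow> bool" where
  "fully_starlike F r \<longleftrightarrow>
     sense_preserving F (ball 0 r) \<and> F 0 = 0 \<and> (\<forall>z\<in>ball 0 r - {0}. F z \<noteq> 0) \<and>
     (\<forall>s\<in>{0<..<r}. \<forall>z. cmod z = s \<longrightarrow>
        Re ((z * wirt_z F z - cnj z * wirt_zbar F z) / F z) > 0)"

end

theory Submission
  imports Defs
begin


lemma sums_norm_le:
  fixes f :: "nat \<Rightarrow> 'a::banach"
  assumes "f sums S" "g sums T" "\<And>n. norm (f n) \<le> g n"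
  shows "norm S \<le> T"
proof -
  have sg: "summable g" using assms(2) by (rule sums_summable)
  have sn: "summable (\<lambda>n. norm (f n))"
    by (rule summable_comparison_test[OF _ sg]) (use assms(3) in auto)
  have "norm S = norm (suminf f)" using sums_unique[OF assms(1)] by simp
  also have "\<dots> \<le> (\<Sum>n. norm (f n))" by (rule summable_norm[OF sn])
  also have "\<dots> \<le> suminf g" by (rule suminf_le[OF assms(3) sn sg])
  also have "\<dots> = T" using sums_unique[OF assms(2)] by simp
  finally show ?thesis .
qed

lemma ser_abs_summable:
  fixes c :: "nat \<Rightarrow> complex"
  assumes ser: "\<forall>z\<in>ball 0 1. summable (\<lambda>n. c n * z ^ n)" and t: "0 \<le> t" "t < 1"
  shows "summable (\<lambda>n. norm (c n) * t ^ n)"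
proof -
  have "summable (\<lambda>n. c n * (complex_of_real ((t+1)/2)) ^ n)"
    using ser t by auto
  from powser_insidea[OF this, of "complex_of_real t"]
  have "summable (\<lambda>n. norm (c n * complex_of_real t ^ n))" using t by simp
  then show ?thesis using t by (simp add: norm_mult norm_power)
qed

lemma ser_abs_summable1:
  fixes c :: "nat \<Rightarrow> complex"
  assumes ser: "\<forall>z\<in>ball 0 1. summable (\<lambda>n. c n * z ^ n)" and t: "0 \<le> t" "t < 1"
  shows "summable (\<lambda>n. real n * norm (c n) * t ^ n)"
proof -
  define ca where "ca = (\<lambda>n. norm (c n))"
  have sm: "summable (\<lambda>n. ca n * x ^ n)" if "norm x < 1" for x :: real
  proof (rule summable_norm_cancel)
    have "summable (\<lambda>n. norm (c n) * \<bar>x\<bar> ^ n)"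
      using ser_abs_summable[OF ser, of "\<bar>x\<bar>"] that by simp
    then show "summable (\<lambda>n. norm (ca n * x ^ n))"
      by (simp add: ca_def abs_mult power_abs)
  qed
  have "summable (\<lambda>n. diffs ca n * t ^ n)"
    by (rule termdiff_converges[of t 1]) (use t sm in auto)
  then have "summable (\<lambda>n. t * (diffs ca n * t ^ n))" by (rule summable_mult)
  then have "summable (\<lambda>n. (\<lambda>n. real n * norm (c n) * t ^ n) (Suc n))"
    by (simp add: diffs_def ca_def algebra_simps)
  from summable_Suc_iff[where f="\<lambda>n. real n * norm (c n) * t ^ n", THEN iffD1, OF this]
  show ?thesis .
qed

lemma ser_deriv:
  fixes c :: "nat \<Rightarrow> complex"
  assumes ser: "\<forall>z\<in>ball 0 1. (\<lambda>n. c n * z ^ n) sums Q z" and z: "norm z < 1"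
  shows "(Q has_field_derivative (\<Sum>n. diffs c n * z ^ n)) (at z)"
proof -
  have sm: "\<And>w. norm w < 1 \<Longrightarrow> summable (\<lambda>n. c n * w ^ n)"
    using ser by (auto simp: sums_iff)
  have "((\<lambda>z. \<Sum>n. c n * z^n) has_field_derivative (\<Sum>n. diffs c n * z^n)) (at z)"
    by (rule termdiffs_strong'[OF sm z])
  then show ?thesis
    by (rule has_field_derivative_transform_within_open[of _ _ _ "ball 0 1"])
       (use z ser in \<open>auto simp: sums_iff\<close>)
qed

lemma ser_zderiv:
  fixes c :: "nat \<Rightarrow> complex"
  assumes ser: "\<forall>z\<in>ball 0 1. summable (\<lambda>n. c n * z ^ n)" and z: "norm z < 1"
  shows "(\<lambda>n. of_nat n * c n * z ^ n) sums (z * (\<Sum>n. diffs c n * z ^ n))"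
proof -
  have "summable (\<lambda>n. diffs c n * z ^ n)"
    by (rule termdiff_converges[of z 1]) (use z ser in auto)
  then have "(\<lambda>n. z * (diffs c n * z ^ n)) sums (z * (\<Sum>n. diffs c n * z ^ n))"
    by (intro sums_mult summable_sums)
  moreover have "(\<lambda>n. z * (diffs c n * z ^ n)) = (\<lambda>n. (\<lambda>n. of_nat n * c n * z ^ n) (Suc n))"
    by (simp add: diffs_def algebra_simps)
  ultimately have "(\<lambda>n. (\<lambda>n. of_nat n * c n * z ^ n) (Suc n)) sums (z * (\<Sum>n. diffs c n * z ^ n))"
    by simp
  from sums_Suc_iff[where f="\<lambda>n. of_nat n * c n * z ^ n", THEN iffD1, OF this]
  show ?thesis by simp
qed

lemma pow_diff_bound:
  fixes z1 z2 :: complex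
  assumes "norm z1 \<le> s" "norm z2 \<le> s"
  shows "s * norm (z1 ^ n - z2 ^ n) \<le> real n * s ^ n * norm (z1 - z2)"
proof (induction n)
  case 0 then show ?case by simp
next
  case (Suc n)
  have s0: "0 \<le> s" using assms(1) norm_ge_zero order_trans by blast
  have eq: "z1 ^ Suc n - z2 ^ Suc n = z1 * (z1 ^ n - z2 ^ n) + (z1 - z2) * z2 ^ n"
    by (simp add: algebra_simps)
  have "s * norm (z1 ^ Suc n - z2 ^ Suc n) \<le> s * (norm z1 * norm (z1 ^ n - z2 ^ n)) + s * (norm (z1 - z2) * norm z2 ^ n)"
    unfolding eq using s0
    by (metis distrib_left mult_left_mono norm_mult norm_power norm_triangle_ineq)
  also have "\<dots> \<le> s * (s * norm (z1 ^ n - z2 ^ n)) + s * (norm (z1 - z2) * s ^ n)"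
    using s0 assms
    by (intro add_mono mult_left_mono mult_right_mono power_mono) auto
  also have "\<dots> \<le> s * (real n * s ^ n * norm (z1 - z2)) + s * (norm (z1 - z2) * s ^ n)"
    using Suc.IH s0 by (intro add_mono mult_left_mono) auto
  also have "\<dots> = real (Suc n) * s ^ Suc n * norm (z1 - z2)"
    by (simp add: algebra_simps)
  finally show ?case .
qed

lemma re_pos_from_norm:
  fixes A B :: complex
  assumes "B \<noteq> 0" "norm (A - B) < norm (A + B)"
  shows "Re (A / B) > 0"
proof -
  define w where "w = A / B"
  have "A - B = B * (w - 1)" "A + B = B * (w + 1)" using assms(1) by (auto simp: w_def field_simps)
  then have "norm (w - 1) < norm (w + 1)" using assms by (simp add: norm_mult)
  then have "norm (w - 1)^2 < norm (w + 1)^2"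
    by (simp add: power_strict_mono)
  then have "(Re w - 1)^2 + (Im w)^2 < (Re w + 1)^2 + (Im w)^2"
    by (simp add: cmod_power2)
  then show ?thesis unfolding w_def[symmetric] by (simp add: power2_eq_square algebra_simps)
qed



lemma pow_le_scaled:
  fixes s r :: real
  assumes "0 \<le> s" "s \<le> r" "0 < r" "k \<le> n"
  shows "s ^ n \<le> (s / r) ^ k * r ^ n"
proof -
  have "s ^ n = (s / r) ^ n * r ^ n" using assms by (simp add: power_divide)
  also have "\<dots> \<le> (s / r) ^ k * r ^ n"
    using assms by (intro mult_right_mono power_decreasing) auto
  finally show ?thesis .
qed

lemma tri3: "norm (z::complex) \<le> norm (X + Y + z) + norm X + norm Y"
  using norm_triangle_ineq4[of "X+Y+z" "X+Y"] norm_triangle_ineq[of X Y] by simp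

theorem lemma3p4:
  fixes a b :: "nat \<Rightarrow> complex" and G H F :: "complex \<Rightarrow> complex" and r :: real
  assumes G_ser: "\<forall>z\<in>ball 0 1. (\<lambda>n. a n * z ^ n) sums G z" and a0: "a 0 = 0"
    and H_ser: "\<forall>z\<in>ball 0 1. (\<lambda>n. b n * z ^ n) sums H z" and b0: "b 0 = 0" and b1: "b 1 = 1"
    and G_nonzero: "\<exists>z\<in>ball 0 1. G z \<noteq> 0"
    and F_def: "\<forall>z. F z = cnj z * G z + H z"
    and r: "0 < r" "r < 1"
    and coeff: "(\<Sum>n. real (n + 2) * cmod (b (n + 2)) * r ^ (n + 1))
              + (\<Sum>n. real (n + 2) * cmod (a (n + 1)) * r ^ (n + 1)) \<le> 1"
  shows "sense_preserving F (ball 0 r) \<and> inj_on F (ball 0 r) \<and> fully_starlike F r"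
proof -
  have Gs: "\<forall>z\<in>ball 0 1. summable (\<lambda>n. a n * z^n)" using G_ser sums_summable by blast
  have Hs: "\<forall>z\<in>ball 0 1. summable (\<lambda>n. b n * z^n)" using H_ser sums_summable by blast
  define c where "c = (\<lambda>n. if n = 1 then 0 else b n)"
  have c0: "c 0 = 0" and c1: "c 1 = 0" using b0 by (auto simp: c_def)
  have cle: "norm (c n) \<le> norm (b n)" for n by (auto simp: c_def)
  define G' where "G' z = (\<Sum>n. diffs a n * z^n)" for z
  define H' where "H' z = (\<Sum>n. diffs b n * z^n)" for z
  have Gd: "(G has_field_derivative G' z) (at z)" if "norm z < 1" for z
    unfolding G'_def by (rule ser_deriv[OF G_ser that])
  have Hd: "(H has_field_derivative H' z) (at z)" if "norm z < 1" for z
    unfolding H'_def by (rule ser_deriv[OF H_ser that])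
  have zG: "(\<lambda>n. of_nat n * a n * z^n) sums (z * G' z)" if "norm z < 1" for z
    unfolding G'_def by (rule ser_zderiv[OF Gs that])
  have Gz: "(\<lambda>n. a n * z^n) sums (G z)" if "norm z < 1" for z
    using G_ser that by auto
  have single: "(\<lambda>n. if n = 1 then z else 0) sums (z::complex)" for z
    by (rule sums_single)
  have zHc: "(\<lambda>n. of_nat n * c n * z^n) sums (z * H' z - z)" if "norm z < 1" for z
  proof -
    have "(\<lambda>n. of_nat n * b n * z^n - (if n = 1 then z else 0)) sums (z * H' z - z)"
      unfolding H'_def by (intro sums_diff ser_zderiv[OF Hs that] single)
    moreover have "(\<lambda>n. of_nat n * b n * z^n - (if n = 1 then z else 0)) = (\<lambda>n. of_nat n * c n * z^n)"
      by (rule ext) (use b1 in \<open>auto simp: c_def\<close>)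
    ultimately show ?thesis by simp
  qed
  have Hc: "(\<lambda>n. c n * z^n) sums (H z - z)" if "norm z < 1" for z
  proof -
    have "(\<lambda>n. b n * z^n - (if n = 1 then z else 0)) sums (H z - z)"
      using H_ser that by (intro sums_diff single) auto
    moreover have "(\<lambda>n. b n * z^n - (if n = 1 then z else 0)) = (\<lambda>n. c n * z^n)"
      by (rule ext) (use b1 in \<open>auto simp: c_def\<close>)
    ultimately show ?thesis by simp
  qed
  have sa0: "summable (\<lambda>n. norm (a n) * t^n)" if "0 \<le> t" "t < 1" for t
    by (rule ser_abs_summable[OF Gs that])
  have sa1: "summable (\<lambda>n. real n * norm (a n) * t^n)" if "0 \<le> t" "t < 1" for t
    by (rule ser_abs_summable1[OF Gs that])
  have sc0: "summable (\<lambda>n. norm (c n) * t^n)" if "0 \<le> t" "t < 1" for t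
    by (rule summable_comparison_test[OF _ ser_abs_summable[OF Hs that]])
       (use that cle in \<open>auto intro!: mult_right_mono\<close>)
  have sc1: "summable (\<lambda>n. real n * norm (c n) * t^n)" if "0 \<le> t" "t < 1" for t
    by (rule summable_comparison_test[OF _ ser_abs_summable1[OF Hs that]])
       (use that cle in \<open>auto intro!: mult_right_mono mult_left_mono\<close>)
  define A0 where "A0 t = (\<Sum>n. norm (a n) * t^n)" for t
  define A1 where "A1 t = (\<Sum>n. real n * norm (a n) * t^n)" for t
  define C0 where "C0 t = (\<Sum>n. norm (c n) * t^n)" for t
  define C1 where "C1 t = (\<Sum>n. real n * norm (c n) * t^n)" for t
  have A0s: "(\<lambda>n. norm (a n) * t^n) sums A0 t" if "0 \<le> t" "t < 1" for t
    unfolding A0_def using sa0[OF that] by (rule summable_sums)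
  have A1s: "(\<lambda>n. real n * norm (a n) * t^n) sums A1 t" if "0 \<le> t" "t < 1" for t
    unfolding A1_def using sa1[OF that] by (rule summable_sums)
  have C0s: "(\<lambda>n. norm (c n) * t^n) sums C0 t" if "0 \<le> t" "t < 1" for t
    unfolding C0_def using sc0[OF that] by (rule summable_sums)
  have C1s: "(\<lambda>n. real n * norm (c n) * t^n) sums C1 t" if "0 \<le> t" "t < 1" for t
    unfolding C1_def using sc1[OF that] by (rule summable_sums)

  have hb: "(\<Sum>n. real (n + 2) * cmod (b (n + 2)) * r ^ (n + 1)) = C1 r / r"
  proof -
    define f where "f n = real n * norm (c n) * r^n" for n
    have fs: "f sums C1 r" unfolding f_def using C1s r by simp
    have f0: "f 0 = 0" "f (Suc 0) = 0" by (auto simp: f_def c_def)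
    have "(\<lambda>n. f (Suc n)) sums C1 r" using sums_Suc_iff[of f "C1 r"] fs f0 by simp
    then have "(\<lambda>n. f (Suc (Suc n))) sums C1 r" using sums_Suc_iff[of "\<lambda>n. f (Suc n)" "C1 r"] f0 by simp
    then have "(\<lambda>n. f (Suc (Suc n)) / r) sums (C1 r / r)" by (rule sums_divide)
    moreover have "(\<lambda>n. f (Suc (Suc n)) / r) = (\<lambda>n. real (n + 2) * cmod (b (n + 2)) * r ^ (n + 1))"
      using r by (auto simp: f_def c_def)
    ultimately show ?thesis by (simp add: sums_iff)
  qed
  have ha: "(\<Sum>n. real (n + 2) * cmod (a (n + 1)) * r ^ (n + 1)) = A1 r + A0 r"
  proof -
    define f where "f n = real n * norm (a n) * r^n + norm (a n) * r^n" for n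
    have fs: "f sums (A1 r + A0 r)" unfolding f_def using A1s A0s r by (intro sums_add) auto
    have f0: "f 0 = 0" by (auto simp: f_def a0)
    have "(\<lambda>n. f (Suc n)) sums (A1 r + A0 r)" using sums_Suc_iff[of f] fs f0 by simp
    moreover have "(\<lambda>n. f (Suc n)) = (\<lambda>n. real (n + 2) * cmod (a (n + 1)) * r ^ (n + 1))"
      by (auto simp: f_def algebra_simps)
    ultimately show ?thesis by (simp add: sums_iff)
  qed
  have hyp: "C1 r / r + (A1 r + A0 r) \<le> 1" using coeff hb ha by simp

  have key: "C1 s + s * (A1 s + A0 s) < s" if s: "0 < s" "s < r" for s
  proof -
    have s1: "s < 1" using s r by simp
    have kC: "C1 s \<le> (s/r)^2 * C1 r"
    proof (rule sums_le[OF _ C1s sums_mult[OF C1s]])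
      fix n
      show "real n * norm (c n) * s^n \<le> (s/r)^2 * (real n * norm (c n) * r^n)"
      proof (cases "n < 2")
        case True then have "c n = 0" using c0 c1 by (cases n) (auto simp: less_Suc_eq)
        then show ?thesis by simp
      next
        case False
        have "s^n \<le> (s/r)^2 * r^n" using s r False by (intro pow_le_scaled) auto
        then have "(real n * norm (c n)) * s^n \<le> (real n * norm (c n)) * ((s/r)^2 * r^n)"
          by (intro mult_left_mono) auto
        then show ?thesis by (simp add: algebra_simps)
      qed
    qed (use s s1 r in auto)
    have kA: "A1 s + A0 s \<le> (s/r) * (A1 r + A0 r)"
    proof (rule sums_le[OF _ sums_add[OF A1s A0s] sums_mult[OF sums_add[OF A1s A0s]]])
      fix n
      show "real n * norm (a n) * s^n + norm (a n) * s^n \<le> (s/r) * (real n * norm (a n) * r^n + norm (a n) * r^n)"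
      proof (cases "n = 0")
        case True then show ?thesis by (simp add: a0)
      next
        case False
        have "s^n \<le> (s/r)^1 * r^n" using s r False by (intro pow_le_scaled) auto
        then have "((real n + 1) * norm (a n)) * s^n \<le> ((real n + 1) * norm (a n)) * ((s/r) * r^n)"
          by (intro mult_left_mono) auto
        then show ?thesis by (simp add: algebra_simps)
      qed
    qed (use s s1 r in auto)
    have "C1 s + s * (A1 s + A0 s) \<le> (s/r)^2 * C1 r + s * ((s/r) * (A1 r + A0 r))"
      using kC kA s by (intro add_mono mult_left_mono) auto
    also have "\<dots> = (s^2 / r) * (C1 r / r + (A1 r + A0 r))"
      using r by (simp add: field_simps power2_eq_square)
    also have "\<dots> \<le> (s^2 / r) * 1"
      using hyp s r by (intro mult_left_mono) auto
    also have "\<dots> < s" using s r by (simp add: field_simps power2_eq_square)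
    finally show ?thesis .
  qed
  have Fe: "F = (\<lambda>z. cnj z * G z + H z)" using F_def by auto
  have FD: "(F has_derivative (\<lambda>h. cnj z * (G' z * h) + cnj h * G z + H' z * h)) (at z)"
    if z: "norm z < 1" for z
  proof -
    have g1: "(G has_derivative (\<lambda>h. G' z * h)) (at z)"
      using Gd[OF z] by (simp add: has_field_derivative_def)
    have h1: "(H has_derivative (\<lambda>h. H' z * h)) (at z)"
      using Hd[OF z] by (simp add: has_field_derivative_def)
    have cj: "((\<lambda>x. cnj x) has_derivative (\<lambda>h. cnj h)) (at z)"
      by (rule has_derivative_cnj[OF has_derivative_ident])
    show ?thesis unfolding Fe
      by (rule has_derivative_add[OF has_derivative_mult[OF cj g1] h1])
  qed
  have WZ: "wirt_z F z = cnj z * G' z + H' z" and WZB: "wirt_zbar F z = G z"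
    if z: "norm z < 1" for z
  proof -
    note fd = frechet_derivative_at[OF FD[OF z], symmetric]
    show "wirt_z F z = cnj z * G' z + H' z"
      unfolding wirt_z_def fd by (simp add: algebra_simps)
    show "wirt_zbar F z = G z"
      unfolding wirt_zbar_def fd by (simp add: algebra_simps)
  qed
  have G00: "G 0 = 0"
  proof -
    have "(\<lambda>n. a n * 0^n) sums G 0" by (rule G_ser[rule_format]) simp
    then have "G 0 = (\<Sum>n. a n * 0^n)" by (simp add: sums_iff)
    then show ?thesis using a0 by simp
  qed
  have H00: "H 0 = 0"
  proof -
    have "(\<lambda>n. b n * 0^n) sums H 0" by (rule H_ser[rule_format]) simp
    then have "H 0 = (\<Sum>n. b n * 0^n)" by (simp add: sums_iff)
    then show ?thesis using b0 by simp
  qed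
  have H'0: "H' 0 = 1" unfolding H'_def using b1 by (simp add: diffs_def)
  have F00: "F 0 = 0" using F_def G00 H00 by simp

  have nterm: "norm (of_nat n * q n * z^n) = real n * norm (q n) * norm z ^ n"
    for n and q :: "nat \<Rightarrow> complex" and z
    by (simp add: norm_mult norm_power)
  have bH1: "norm (z * H' z - z) \<le> C1 (norm z)" if "norm z < 1" for z
    by (rule sums_norm_le[OF zHc[OF that] C1s]) (use that nterm in auto)
  have bG1: "norm (z * G' z) \<le> A1 (norm z)" if "norm z < 1" for z
    by (rule sums_norm_le[OF zG[OF that] A1s]) (use that nterm in auto)
  have bG0: "norm (G z) \<le> A0 (norm z)" if "norm z < 1" for z
    by (rule sums_norm_le[OF Gz[OF that] A0s]) (use that in \<open>auto simp: norm_mult norm_power\<close>)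

  have sp: "sense_preserving F (ball 0 r)"
    unfolding sense_preserving_def
  proof (intro ballI conjI)
    fix z :: complex assume "z \<in> ball 0 r"
    then have zr: "norm z < r" by simp
    then have z1: "norm z < 1" using r by simp
    show "F differentiable (at z)" using FD[OF z1] by (auto simp: differentiable_def)
    have "norm (G z) < norm (wirt_z F z)"
    proof (cases "z = 0")
      case True then show ?thesis using WZ[OF z1] G00 H'0 by simp
    next
      case False
      define s where "s = norm z"
      have s: "0 < s" "s < r" using False zr by (auto simp: s_def)
      have eq: "z * wirt_z F z = cnj z * (z * G' z) + (z * H' z - z) + z"
        using WZ[OF z1] by (simp add: algebra_simps)
      have n1: "norm (cnj z * (z * G' z)) \<le> s * A1 s"
        using bG1[OF z1] by (simp add: norm_mult s_def mult_left_mono)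
      have "s - C1 s - s * A1 s \<le> norm (z * wirt_z F z)"
        unfolding eq using n1 bH1[OF z1] tri3[of z "cnj z * (z * G' z)" "z * H' z - z"]
        unfolding s_def by linarith
      moreover have "norm (z * G z) \<le> s * A0 s"
        using bG0[OF z1] by (simp add: norm_mult s_def mult_left_mono)
      ultimately have "s * norm (G z) < s * norm (wirt_z F z)"
        using key[OF s] by (simp add: norm_mult s_def algebra_simps)
      then show ?thesis using s by simp
    qed
    then have "norm (G z)^2 < norm (wirt_z F z)^2"
      by (simp add: power_strict_mono)
    then show "jacobian_c F z > 0" unfolding jacobian_c_def WZB[OF z1] by simp
  qed
  have inj: "inj_on F (ball 0 r)"
  proof (rule inj_onI, rule ccontr)
    fix z1 z2 assume z1r: "z1 \<in> ball 0 r" and z2r: "z2 \<in> ball 0 r" and eqF: "F z1 = F z2"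
      and ne: "z1 \<noteq> z2"
    define s where "s = max (norm z1) (norm z2)"
    define d where "d = z1 - z2"
    have z1: "norm z1 < 1" and z2: "norm z2 < 1" using z1r z2r r by auto
    have s: "0 < s" "s < r" using ne z1r z2r by (auto simp: s_def max_def)
    have s1: "s < 1" using s r by simp
    have ns: "norm z1 \<le> s" "norm z2 \<le> s" by (auto simp: s_def)
    have dpos: "0 < norm d" using ne by (simp add: d_def)
    have ser: "(\<lambda>n. c n * (z1^n - z2^n) + a n * (cnj z1 * z1^n - cnj z2 * z2^n)) sums
               ((H z1 - z1) - (H z2 - z2) + (cnj z1 * G z1 - cnj z2 * G z2))"
    proof -
      have "(\<lambda>n. (c n * z1^n - c n * z2^n) + (cnj z1 * (a n * z1^n) - cnj z2 * (a n * z2^n))) sums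
               ((H z1 - z1) - (H z2 - z2) + (cnj z1 * G z1 - cnj z2 * G z2))"
        by (intro sums_add sums_diff sums_mult Hc Gz z1 z2)
      then show ?thesis by (simp add: algebra_simps)
    qed
    have maj: "(\<lambda>n. (norm d / s) * (real n * norm (c n) * s^n) + norm d * (real n * norm (a n) * s^n + norm (a n) * s^n))
               sums ((norm d / s) * C1 s + norm d * (A1 s + A0 s))"
      using s s1 by (intro sums_add sums_mult A1s A0s C1s) auto
    have "norm ((H z1 - z1) - (H z2 - z2) + (cnj z1 * G z1 - cnj z2 * G z2))
          \<le> (norm d / s) * C1 s + norm d * (A1 s + A0 s)"
    proof (rule sums_norm_le[OF ser maj])
      fix n
      have p: "s * norm (z1^n - z2^n) \<le> real n * s^n * norm d"
        unfolding d_def by (rule pow_diff_bound[OF ns])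
      then have p': "norm (z1^n - z2^n) \<le> (norm d / s) * (real n * s^n)"
        using s by (simp add: field_simps)
      have "norm (c n * (z1^n - z2^n)) \<le> norm (c n) * ((norm d / s) * (real n * s^n))"
        unfolding norm_mult by (rule mult_left_mono[OF p' norm_ge_zero])
      moreover
      have e2: "cnj z1 * z1^n - cnj z2 * z2^n = cnj d * z1^n + cnj z2 * (z1^n - z2^n)"
        by (simp add: d_def algebra_simps)
      have "norm (cnj d * z1^n + cnj z2 * (z1^n - z2^n)) \<le> norm d * s^n + s * norm (z1^n - z2^n)"
        using norm_triangle_ineq[of "cnj d * z1^n" "cnj z2 * (z1^n - z2^n)"] ns
        by (simp add: norm_mult norm_power)
           (smt (verit) dpos mult_left_mono mult_right_mono norm_ge_zero power_mono zero_le_power)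
      then have "norm (cnj z1 * z1^n - cnj z2 * z2^n) \<le> norm d * (real n * s^n + s^n)"
        unfolding e2 using p by (simp add: algebra_simps)
      then have "norm (a n * (cnj z1 * z1^n - cnj z2 * z2^n)) \<le> norm (a n) * (norm d * (real n * s^n + s^n))"
        by (simp add: norm_mult mult_left_mono)
      ultimately show "norm (c n * (z1^n - z2^n) + a n * (cnj z1 * z1^n - cnj z2 * z2^n))
          \<le> (norm d / s) * (real n * norm (c n) * s^n) + norm d * (real n * norm (a n) * s^n + norm (a n) * s^n)"
        using norm_triangle_ineq[of "c n * (z1^n - z2^n)" "a n * (cnj z1 * z1^n - cnj z2 * z2^n)"]
        by (simp add: algebra_simps)
    qed
    moreover have "(H z1 - z1) - (H z2 - z2) + (cnj z1 * G z1 - cnj z2 * G z2) = - d"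
      using eqF F_def by (simp add: d_def algebra_simps)
    ultimately have le: "norm d \<le> (norm d / s) * C1 s + norm d * (A1 s + A0 s)" by simp
    have "C1 s / s + (A1 s + A0 s) < 1" using key[OF s] s by (simp add: field_simps)
    then have "norm d * (C1 s / s + (A1 s + A0 s)) < norm d * 1"
      using dpos by (intro mult_strict_left_mono) auto
    then show False using le by (simp add: algebra_simps)
  qed
  have Fnz: "F z \<noteq> 0" if "z \<in> ball 0 r - {0}" for z
  proof
    assume "F z = 0"
    then have "F z = F 0" using F00 by simp
    then have "z = 0" using inj_onD[OF inj] that r by auto
    then show False using that by simp
  qed
  have star: "Re ((z * wirt_z F z - cnj z * wirt_zbar F z) / F z) > 0"
    if zs: "norm z = s" and s: "0 < s" "s < r" for z s
  proof -
    have s1: "s < 1" using s r by simp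
    have z1: "norm z < 1" using zs s1 by simp
    have Bnz: "F z \<noteq> 0" using Fnz[of z] zs s by auto
    have s0: "0 \<le> s" using s by simp
    have bS1': "norm ((z * H' z - z) - (H z - z)) \<le> C1 s - C0 s"
    proof (rule sums_norm_le[OF sums_diff[OF zHc[OF z1] Hc[OF z1]] sums_diff[OF C1s[OF s0 s1] C0s[OF s0 s1]]])
      fix n
      show "norm (of_nat n * c n * z^n - c n * z^n) \<le> real n * norm (c n) * s^n - norm (c n) * s^n"
      proof (cases "n = 0")
        case True then show ?thesis using c0 by simp
      next
        case False
        have "of_nat n * c n * z^n - c n * z^n = of_real (real n - 1) * (c n * z^n)"
          by (simp add: algebra_simps)
        then have "norm (of_nat n * c n * z^n - c n * z^n) = (real n - 1) * (norm (c n) * s^n)"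
        proof -
          have "(of_nat n - 1 :: complex) = of_real (real n - 1)" by simp
          then have "cmod (of_nat n - 1) = \<bar>real n - 1\<bar>" by (simp only: norm_of_real)
          then have "cmod (of_nat n - 1) = real n - 1" using False by simp
          then show ?thesis using False zs \<open>of_nat n * c n * z^n - c n * z^n = of_real (real n - 1) * (c n * z^n)\<close>
            by (simp add: norm_mult norm_power)
        qed
        then show ?thesis by (simp add: algebra_simps)
      qed
    qed
    then have bS1: "norm (z * H' z - H z) \<le> C1 s - C0 s" by simp
    have bS2': "norm ((z * H' z - z) + (H z - z)) \<le> C1 s + C0 s"
    proof (rule sums_norm_le[OF sums_add[OF zHc[OF z1] Hc[OF z1]] sums_add[OF C1s[OF s0 s1] C0s[OF s0 s1]]])
      fix n
      show "norm (of_nat n * c n * z^n + c n * z^n) \<le> real n * norm (c n) * s^n + norm (c n) * s^n"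
        using norm_triangle_ineq[of "of_nat n * c n * z^n" "c n * z^n"] zs
        by (simp add: norm_mult norm_power)
    qed
    then have bS2: "norm (z * H' z + H z - 2 * z) \<le> C1 s + C0 s" by (simp add: algebra_simps)
    have bS3: "norm (z * G' z - 2 * G z) \<le> A1 s + 2 * A0 s"
    proof (rule sums_norm_le[OF sums_diff[OF zG[OF z1] sums_mult[OF Gz[OF z1]]] sums_add[OF A1s[OF s0 s1] sums_mult[OF A0s[OF s0 s1]]]])
      fix n
      show "norm (of_nat n * a n * z^n - 2 * (a n * z^n)) \<le> real n * norm (a n) * s^n + 2 * (norm (a n) * s^n)"
        using norm_triangle_ineq4[of "of_nat n * a n * z^n" "2 * (a n * z^n)"] zs
        by (simp add: norm_mult norm_power)
    qed
    have bS4: "norm (cnj z * (z * G' z)) \<le> s * A1 s"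
      using bG1[OF z1] zs s by (simp add: norm_mult mult_left_mono)
    have bS5: "norm (cnj z * (z * G' z - 2 * G z)) \<le> s * (A1 s + 2 * A0 s)"
      using bS3 zs s by (simp add: norm_mult mult_left_mono)
    define A where "A = z * wirt_z F z - cnj z * wirt_zbar F z"
    have eA: "A - F z = (z * H' z - H z) + cnj z * (z * G' z - 2 * G z)"
      unfolding A_def WZ[OF z1] WZB[OF z1] using F_def by (simp add: algebra_simps)
    have eB: "A + F z - 2 * z = (z * H' z + H z - 2 * z) + cnj z * (z * G' z)"
      unfolding A_def WZ[OF z1] WZB[OF z1] using F_def by (simp add: algebra_simps)
    have n1: "norm (A - F z) \<le> (C1 s - C0 s) + s * (A1 s + 2 * A0 s)"
      unfolding eA using norm_triangle_ineq[of "z * H' z - H z" "cnj z * (z * G' z - 2 * G z)"] bS1 bS5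
      by linarith
    have n2: "norm (A + F z - 2 * z) \<le> (C1 s + C0 s) + s * A1 s"
      unfolding eB using norm_triangle_ineq[of "z * H' z + H z - 2 * z" "cnj z * (z * G' z)"] bS2 bS4
      by linarith
    have n3: "norm (2 * z) \<le> norm (A + F z) + norm (A + F z - 2 * z)"
      using norm_triangle_ineq4[of "A + F z" "A + F z - 2 * z"] by simp
    have n4: "norm (2 * z) = 2 * s" using zs by (simp add: norm_mult)
    have "norm (A - F z) < norm (A + F z)"
      using n1 n2 n3 n4 key[OF s] by (simp add: algebra_simps)
    then show ?thesis unfolding A_def[symmetric] by (rule re_pos_from_norm[OF Bnz])
  qed
  have fs: "fully_starlike F r"
    unfolding fully_starlike_def using sp F00 Fnz star by auto
  show ?thesis using sp inj fs by blast
qed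

end
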